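(* Let $d\in\mathbb{N}$ and let $C(d)$ be a constant such that for every Radon log-concave probability measure $\mu$ on a locally convex space $E$, every $f\in\mathcal{P}^d(\mu)$ and every $\varphi\in C_b^\infty(\mathbb{R})$ with $\|\varphi\|_\infty\le1$ one has $\sigma_f^{1/d}\int\varphi'(f)\,d\mu\le C(d)\|\varphi'\|_\infty^{1-1/d}$. Let $\mu$ be a Radon log-concave probability measure on a locally convex space $E$. Then for every pair of functions $f,g\in\mathcal{P}^d(\mu)$, neither of which coincides a.e. with a constant, one has $$\|\mu\circ f^{-1}-\mu\circ g^{-1}\|_{\rm TV}\le C_d(\sigma_f,\sigma_g)\,\|\mu\circ f^{-1}-\mu\circ g^{-1}\|_{\rm FM}^{1/(1+d)},$$ where $$C_d(\sigma_f,\sigma_g)=2+2C(d)\bigl(\sigma_f^{-1/d}+\sigma_g^{-1/d}\bigr)(2\pi)^{-1/2}\int_{\mathbb{R}} e^{-t^2/2}|t|^{1/d}\,dt.$$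
   Context: Log-concave measures on $\mathbb{R}^n$: density $e^{-V}$ w.r.t. Lebesgue measure on an affine subspace, $V$ convex with values in $(-\infty,+\infty]$. A Radon probability measure on a locally convex space $E$ is log-concave if all its images under continuous linear maps to $\mathbb{R}^n$ are log-concave. $\mathcal{P}^d(\mu)$: closure in $L^2(\mu)$ of functions $p(\ell_1,\dots,\ell_n)$ with $\ell_i\in E^*$, $p$ a polynomial of degree $d$ on $\mathbb{R}^n$. $\sigma_f^2=\int(f-\int f\,d\mu)^2d\mu$. For probability measures $\nu_1,\nu_2$ on $\mathbb{R}$: $\|\nu_1-\nu_2\|_{\rm TV}=\sup\{\int\varphi\,d(\nu_1-\nu_2):\varphi\in C_b^\infty(\mathbb{R}),\|\varphi\|_\infty\le1\}$ and $\|\nu_1-\nu_2\|_{\rm FM}=\sup\{\int\varphi\,d(\nu_1-\nu_2):\varphi\in C_b^\infty(\mathbb{R}),\|\varphi\|_\infty\le1,\|\varphi'\|_\infty\le1\}$, where $C_b^\infty(\mathbb{R})$ is the space of bounded smooth functions with bounded derivatives of all orders. *)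

theory Defs
  imports "HOL-Probability.Probability"
begin

definition locally_convex_space :: "('a::{real_vector,t2_space}) itself \<Rightarrow> bool" where
  "locally_convex_space _ \<longleftrightarrow>
     continuous_on UNIV (\<lambda>(x::'a, y::'a). x + y) \<and>
     continuous_on UNIV (\<lambda>(c::real, x::'a). c *\<^sub>R x) \<and>
     (\<forall>U::'a set. open U \<and> 0 \<in> U \<longrightarrow> (\<exists>V. open V \<and> convex V \<and> 0 \<in> V \<and> V \<subseteq> U))"

definition dual_space :: "('a::{real_vector,topological_space} \<Rightarrow> real) set" where
  "dual_space = {l. linear l \<and> continuous_on UNIV l}"

definition radon_measure :: "'a::topological_space measure \<Rightarrow> bool" where
  "radon_measure \<mu> \<longleftrightarrow> sets \<mu> = sets borel \<and>
     (\<forall>B \<in> sets borel. emeasure \<mu> B = (SUP K \<in> {K. compact K \<and> K \<subseteq> B}. emeasure \<mu> K))"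

text \<open>\<open>\<real>\<^sup>n\<close> is represented by the extensional functions \<open>PiE {..<n} (\<lambda>_. UNIV)\<close>,
 with Borel sets \<open>PiM {..<n} (\<lambda>_. borel)\<close> and Lebesgue measure \<open>PiM {..<n} (\<lambda>_. lborel)\<close>.\<close>

definition Rn_borel :: "nat \<Rightarrow> (nat \<Rightarrow> real) measure" where
  "Rn_borel n = PiM {..<n} (\<lambda>_. borel)"

definition Rn_lebesgue :: "nat \<Rightarrow> (nat \<Rightarrow> real) measure" where
  "Rn_lebesgue n = PiM {..<n} (\<lambda>_. lborel)"

definition convex_fn_on :: "nat \<Rightarrow> (nat \<Rightarrow> real) set \<Rightarrow> ((nat \<Rightarrow> real) \<Rightarrow> real) \<Rightarrow> bool" where
  "convex_fn_on k D V \<longleftrightarrow> D \<subseteq> PiE {..<k} (\<lambda>_. UNIV) \<and>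
     (\<forall>x\<in>D. \<forall>y\<in>D. \<forall>t::real. 0 \<le> t \<and> t \<le> 1 \<longrightarrow>
        (let z = restrict (\<lambda>i. t * x i + (1 - t) * y i) {..<k}
         in z \<in> D \<and> V z \<le> t * V x + (1 - t) * V y))"

text \<open>A probability measure \<open>\<nu>\<close> on \<open>\<real>\<^sup>n\<close> is log-concave if it has density \<open>e\<^sup>-\<^sup>W\<close>,
 \<open>W\<close> convex with values in \<open>(-\<infinity>,+\<infinity>]\<close>, w.r.t. Lebesgue measure on an affine subspace \<open>L\<close>.
 \<open>L = a + span(u_0,...,u_{k-1})\<close> with \<open>u_j\<close> orthonormal; Lebesgue measure on \<open>L\<close> is the image
 of Lebesgue measure on \<open>\<real>\<^sup>k\<close> under the isometry \<open>y \<mapsto> a + \<Sum> y_j u_j\<close>; the density is written in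
 these coordinates: \<open>V = W \<circ> param\<close> finite exactly on the convex set \<open>D\<close>, \<open>+\<infinity>\<close> outside.\<close>
definition log_concave_Rn :: "nat \<Rightarrow> (nat \<Rightarrow> real) measure \<Rightarrow> bool" where
  "log_concave_Rn n \<nu> \<longleftrightarrow>
     (\<exists>k a u D V.
        a \<in> PiE {..<n} (\<lambda>_. UNIV) \<and>
        (\<forall>j<k. u j \<in> PiE {..<n} (\<lambda>_. UNIV)) \<and>
        (\<forall>j<k. \<forall>j'<k. (\<Sum>i<n. u j i * u j' i) = (if j = j' then 1 else 0)) \<and>
        convex_fn_on k D V \<and>
        \<nu> = distr (density (Rn_lebesgue k) (\<lambda>y. ennreal (indicator D y * exp (- V y))))
                   (Rn_borel n)
                   (\<lambda>y. restrict (\<lambda>i. a i + (\<Sum>j<k. y j * u j i)) {..<n}))"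

definition log_concave :: "'a::{real_vector,topological_space} measure \<Rightarrow> bool" where
  "log_concave \<mu> \<longleftrightarrow>
     (\<forall>n l. (\<forall>i<n. l i \<in> dual_space) \<longrightarrow>
        log_concave_Rn n (distr \<mu> (Rn_borel n) (\<lambda>x. restrict (\<lambda>i. l i x) {..<n})))"

definition poly_functionals :: "nat \<Rightarrow> ('a::{real_vector,topological_space} \<Rightarrow> real) set" where
  "poly_functionals d = {(\<lambda>x. \<Sum>\<alpha>\<in>A. c \<alpha> * (\<Prod>i<n. (l i x) ^ (\<alpha> i))) | (n::nat) l A c.
      (\<forall>i<n. l i \<in> dual_space) \<and> finite A \<and>
      (\<forall>\<alpha>\<in>A. (\<Sum>i<n. \<alpha> i) \<le> d)}"

definition Pd :: "nat \<Rightarrow> 'a::{real_vector,topological_space} measure \<Rightarrow> ('a \<Rightarrow> real) set" where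
  "Pd d \<mu> = {f. f \<in> borel_measurable \<mu> \<and> integrable \<mu> (\<lambda>x. (f x)\<^sup>2) \<and>
      (\<exists>p. (\<forall>k. p k \<in> poly_functionals d) \<and>
           (\<lambda>k. \<integral>\<^sup>+ x. ennreal ((f x - p k x)\<^sup>2) \<partial>\<mu>) \<longlonglongrightarrow> 0)}"

definition sigma :: "'a measure \<Rightarrow> ('a \<Rightarrow> real) \<Rightarrow> real" where
  "sigma \<mu> f = sqrt (\<integral>x. (f x - (\<integral>y. f y \<partial>\<mu>))\<^sup>2 \<partial>\<mu>)"

definition Cb_inf :: "(real \<Rightarrow> real) set" where
  "Cb_inf = {\<phi>. \<exists>D :: nat \<Rightarrow> real \<Rightarrow> real. D 0 = \<phi> \<and>
      (\<forall>k x. (D k has_real_derivative D (Suc k) x) (at x)) \<and>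
      (\<forall>k. bounded (range (D k)))}"

definition sup_norm :: "(real \<Rightarrow> real) \<Rightarrow> real" where
  "sup_norm \<phi> = (SUP x. \<bar>\<phi> x\<bar>)"

definition tv_dist :: "real measure \<Rightarrow> real measure \<Rightarrow> real" where
  "tv_dist \<nu>1 \<nu>2 = (SUP \<phi> \<in> {\<phi>. \<phi> \<in> Cb_inf \<and> sup_norm \<phi> \<le> 1}.
       (\<integral>x. \<phi> x \<partial>\<nu>1) - (\<integral>x. \<phi> x \<partial>\<nu>2))"

definition fm_dist :: "real measure \<Rightarrow> real measure \<Rightarrow> real" where
  "fm_dist \<nu>1 \<nu>2 = (SUP \<phi> \<in> {\<phi>. \<phi> \<in> Cb_inf \<and> sup_norm \<phi> \<le> 1 \<and> sup_norm (deriv \<phi>) \<le> 1}.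
       (\<integral>x. \<phi> x \<partial>\<nu>1) - (\<integral>x. \<phi> x \<partial>\<nu>2))"

definition Cd_const :: "nat \<Rightarrow> real \<Rightarrow> real \<Rightarrow> real \<Rightarrow> real" where
  "Cd_const d C sf sg = 2 + 2 * C * (sf powr (-1 / real d) + sg powr (-1 / real d)) *
      (2 * pi) powr (-1/2) * (\<integral>t. exp (- t\<^sup>2 / 2) * \<bar>t\<bar> powr (1 / real d) \<partial>lborel)"

end

theory Submission
  imports Defs
begin

lemma chord8: fixes q :: real assumes "0 \<le> q" "q \<le> 1"
  shows "8 powr (-q) \<le> 1 - 7/8 * q"
proof -
  have "exp ((1 - q) *\<^sub>R 0 + q *\<^sub>R (- ln 8)) \<le> (1 - q) * exp 0 + q * exp (- ln 8)"
    using convex_onD[OF exp_convex, of q 0 "- ln 8"] assms by simp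
  moreover have "exp (- ln 8) = (1/8::real)" by (simp add: exp_minus)
  moreover have "8 powr (-q) = exp ((1 - q) *\<^sub>R 0 + q *\<^sub>R (- ln (8::real)))"
    by (simp add: powr_def)
  ultimately show ?thesis by simp
qed

lemma half_int:
  fixes q :: real assumes q: "0 < q"
  shows "has_bochner_integral lborel
     (\<lambda>x. indicator {0..} x *\<^sub>R (indicator {-1..1} x * (1 - \<bar>x\<bar> powr q))) (1 - 1/(q+1))"
proof -
  have cont: "continuous_on {0..1} (\<lambda>x::real. 1 - x powr q)"
    by (intro continuous_intros continuous_on_powr') (use q in auto)
  have si: "set_integrable lborel {0..1} (\<lambda>x::real. 1 - x powr q)"
    by (rule borel_integrable_atLeastAtMost'[OF cont])
  have eqf: "(\<lambda>x. indicator {0..} x *\<^sub>R (indicator {-1..1} x * (1 - \<bar>x\<bar> powr q)))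
      = (\<lambda>x::real. indicator {0..1} x *\<^sub>R (1 - x powr q))"
    by (auto simp: fun_eq_iff split: split_indicator)
  have hi: "((\<lambda>x::real. 1 - x powr q) has_integral (1 - 1/(q+1))) {0..1}"
  proof -
    have "((\<lambda>x::real. x powr q) has_integral (1 powr (q+1) / (q+1))) {0..1}"
      by (rule has_integral_powr_from_0) (use q in auto)
    then have "((\<lambda>x::real. x powr q) has_integral (1 / (q+1))) {0..1}" by simp
    from has_integral_diff[OF has_integral_const_real[of 1 0 1] this]
    show ?thesis by simp
  qed
  have "(LINT x:{0..1}|lborel. 1 - x powr q) = integral {0..1} (\<lambda>x::real. 1 - x powr q)"
    by (rule set_borel_integral_eq_integral(2)[OF si])
  also have "\<dots> = 1 - 1/(q+1)" using hi by (rule integral_unique)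
  finally have "(LINT x:{0..1}|lborel. 1 - x powr q) = 1 - 1/(q+1)" .
  then show ?thesis
    using si unfolding eqf set_integrable_def set_lebesgue_integral_def
    by (simp add: has_bochner_integral_iff)
qed

lemma k_int:
  fixes q :: real assumes q: "0 < q"
  shows "has_bochner_integral lborel
     (\<lambda>x. indicator {-1..1} x * (1 - \<bar>x\<bar> powr q)) (2 * (1 - 1/(q+1)))"
proof -
  have "has_bochner_integral lborel (\<lambda>x. indicator {-1..1} x * (1 - \<bar>x\<bar> powr q)) (2 *\<^sub>R (1 - 1/(q+1)))"
    by (rule has_bochner_integral_even_function[OF half_int[OF q]]) (auto simp: indicator_def)
  then show ?thesis by simp
qed

lemma gauss_lower:
  fixes q :: real assumes q: "0 < q" "q \<le> 1"
  shows "8 powr (-q) \<le> (2*pi) powr (-1/2) * (\<integral>t. exp (- t\<^sup>2/2) * \<bar>t\<bar> powr q \<partial>lborel)"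
proof -
  define c where "c = 1 / sqrt (2*pi)"
  have c_pos: "0 < c" unfolding c_def by simp
  have cpow: "(2*pi) powr (-1/2) = c"
  proof -
    have "(2*pi) powr (-1/2) = (2*pi) powr (- (1/2))" by simp
    also have "\<dots> = inverse ((2*pi) powr (1/2))" by (rule powr_minus)
    also have "\<dots> = inverse (sqrt (2*pi))" by (simp add: powr_half_sqrt)
    finally show ?thesis unfolding c_def inverse_eq_divide .
  qed
  have std: "\<And>t. std_normal_density t = c * exp (- t\<^sup>2/2)"
    unfolding c_def by (simp add: std_normal_density_def)
  have std_le: "\<And>t. std_normal_density t \<le> c"
    unfolding std using c_pos by (simp add: mult_le_cancel_left1)
  have pw_le: "\<bar>t\<bar> powr q \<le> 1 + \<bar>t\<bar>" for t :: real
  proof (cases "\<bar>t\<bar> \<le> 1")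
    case True
    then have "\<bar>t\<bar> powr q \<le> 1 powr q" by (intro powr_mono2) (use q in auto)
    then show ?thesis by simp
  next
    case False
    then have "\<bar>t\<bar> powr q \<le> \<bar>t\<bar> powr 1" by (intro powr_mono) (use q in auto)
    then show ?thesis by simp
  qed
  have int1: "integrable lborel (\<lambda>t. std_normal_density t * \<bar>t\<bar> powr q)"
  proof (rule Bochner_Integration.integrable_bound)
    show "integrable lborel (\<lambda>t. std_normal_density t * \<bar>t\<bar>^0 + std_normal_density t * \<bar>t\<bar>^1)"
      by (rule Bochner_Integration.integrable_add; rule integrable_std_normal_moment_abs)
    show "(\<lambda>t. std_normal_density t * \<bar>t\<bar> powr q) \<in> borel_measurable lborel" by measurable
    show "AE x in lborel. norm (std_normal_density x * \<bar>x\<bar> powr q)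
        \<le> norm (std_normal_density x * \<bar>x\<bar> ^ 0 + std_normal_density x * \<bar>x\<bar> ^ 1)"
    proof (intro AE_I2)
      fix x :: real
      have "std_normal_density x * \<bar>x\<bar> powr q \<le> std_normal_density x * (1 + \<bar>x\<bar>)"
        by (intro mult_left_mono pw_le) simp
      then show "norm (std_normal_density x * \<bar>x\<bar> powr q)
        \<le> norm (std_normal_density x * \<bar>x\<bar> ^ 0 + std_normal_density x * \<bar>x\<bar> ^ 1)"
        by (simp add: algebra_simps)
    qed
  qed
  have kint: "integrable lborel (\<lambda>x. indicator {-1..1} x * (1 - \<bar>x\<bar> powr q))"
    using k_int[OF q(1)] by (simp add: has_bochner_integral_iff)
  have kval: "(\<integral>x. indicator {-1..1} x * (1 - \<bar>x\<bar> powr q) \<partial>lborel) = 2 * (1 - 1/(q+1))"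
    using k_int[OF q(1)] by (simp add: has_bochner_integral_iff)
  have pt: "std_normal_density t - c * (indicator {-1..1} t * (1 - \<bar>t\<bar> powr q))
      \<le> std_normal_density t * \<bar>t\<bar> powr q" for t :: real
  proof (cases "\<bar>t\<bar> \<le> 1")
    case True
    have "\<bar>t\<bar> powr q \<le> 1 powr q" using True by (intro powr_mono2) (use q in auto)
    then have "0 \<le> 1 - \<bar>t\<bar> powr q" by simp
    then have "std_normal_density t * (1 - \<bar>t\<bar> powr q) \<le> c * (1 - \<bar>t\<bar> powr q)"
      by (intro mult_right_mono std_le)
    moreover have "t \<in> {-1..1}" using True by auto
    ultimately show ?thesis by (simp add: algebra_simps)
  next
    case False
    then have "1 \<le> \<bar>t\<bar> powr q" using q ge_one_powr_ge_zero[of "\<bar>t\<bar>" q] by simp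
    then have "std_normal_density t * 1 \<le> std_normal_density t * \<bar>t\<bar> powr q"
      by (intro mult_left_mono) simp_all
    moreover have "t \<notin> {-1..1}" using False by auto
    ultimately show ?thesis by simp
  qed
  have kint2: "integrable lborel (\<lambda>t. std_normal_density t - c * (indicator {-1..1} t * (1 - \<bar>t\<bar> powr q)))"
    by (rule Bochner_Integration.integrable_diff[OF integrable_normal_density integrable_mult_right[OF kint]]) simp
  have le1: "(\<integral>t. std_normal_density t - c * (indicator {-1..1} t * (1 - \<bar>t\<bar> powr q)) \<partial>lborel)
      \<le> (\<integral>t. std_normal_density t * \<bar>t\<bar> powr q \<partial>lborel)"
    by (rule integral_mono[OF kint2 int1 pt])
  have eq1: "(\<integral>t. std_normal_density t - c * (indicator {-1..1} t * (1 - \<bar>t\<bar> powr q)) \<partial>lborel)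
     = 1 - c * (2 * (1 - 1/(q+1)))"
    by (subst Bochner_Integration.integral_diff) (auto intro!: integrable_mult_right kint simp: kval)
  have low: "1 - c * (2 * (1 - 1/(q+1))) \<le> (\<integral>t. std_normal_density t * \<bar>t\<bar> powr q \<partial>lborel)"
    using le1 eq1 by simp
  have "(\<integral>t. std_normal_density t * \<bar>t\<bar> powr q \<partial>lborel)
     = c * (\<integral>t. exp (- t\<^sup>2/2) * \<bar>t\<bar> powr q \<partial>lborel)"
    unfolding std by (simp add: mult.assoc)
  note low = low[unfolded this]
  have pi3: "3 < pi" by (rule pi_gt3)
  have "sqrt 6 \<le> sqrt (2*pi)" using pi3 by simp
  moreover have "(16/7::real) \<le> sqrt 6" by (rule real_le_rsqrt) (simp add: power2_eq_square)
  ultimately have sq: "16/7 \<le> sqrt (2*pi)" by linarith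
  have c_le: "c \<le> 7/16" unfolding c_def using sq by (simp add: divide_simps)
  have "2 * (1 - 1/(q+1)) \<le> 2 * q" using q by (simp add: field_simps)
  then have "c * (2 * (1 - 1/(q+1))) \<le> 7/16 * (2*q)"
    using c_le c_pos q by (intro mult_mono) (auto simp: field_simps)
  then have "1 - 7/8*q \<le> 1 - c * (2 * (1 - 1/(q+1)))" by simp
  with chord8[of q] q low cpow show ?thesis by simp
qed

lemma sup_norm_ge:
  assumes "bounded (range \<phi>)" shows "\<bar>\<phi> x\<bar> \<le> sup_norm \<phi>"
proof -
  from assms obtain B where B: "\<And>y. \<bar>\<phi> y\<bar> \<le> B" by (auto simp: bounded_iff)
  have "bdd_above ((\<lambda>y. \<bar>\<phi> y\<bar>) ` UNIV)" using B by (auto intro!: bdd_aboveI2)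
  then show ?thesis unfolding sup_norm_def by (rule cSUP_upper[OF UNIV_I])
qed

lemma sup_norm_le:
  assumes "\<And>x. \<bar>\<phi> x\<bar> \<le> B" shows "sup_norm \<phi> \<le> B"
  unfolding sup_norm_def by (rule cSUP_least) (use assms in auto)

lemma sup_norm_nonneg:
  assumes "bounded (range \<phi>)" shows "0 \<le> sup_norm \<phi>"
  using sup_norm_ge[OF assms, of 0] by linarith

lemma bounded_range_iff_abs: "bounded (range (\<phi>::real\<Rightarrow>real)) \<longleftrightarrow> (\<exists>B. \<forall>x. \<bar>\<phi> x\<bar> \<le> B)"
  by (auto simp: bounded_iff)

lemma Cb_infI:
  assumes "D 0 = \<phi>" "\<And>k x. (D k has_real_derivative D (Suc k) x) (at x)"
    "\<And>k. \<exists>B. \<forall>x. \<bar>D k x\<bar> \<le> B"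
  shows "\<phi> \<in> Cb_inf"
  unfolding Cb_inf_def using assms by (auto simp: bounded_range_iff_abs)

lemma Cb_infE:
  assumes "\<phi> \<in> Cb_inf"
  obtains D where "D 0 = \<phi>" "\<And>k x. (D k has_real_derivative D (Suc k) x) (at x)"
    "\<And>k. \<exists>B. \<forall>x. \<bar>D k x\<bar> \<le> B"
  using assms unfolding Cb_inf_def by (auto simp: bounded_range_iff_abs)

lemma Cb_inf_deriv:
  assumes "\<phi> \<in> Cb_inf" shows "(\<phi> has_real_derivative deriv \<phi> x) (at x)"
proof -
  obtain D where D: "D 0 = \<phi>" "\<And>k x. (D k has_real_derivative D (Suc k) x) (at x)"
    using Cb_infE[OF assms] by metis
  then show ?thesis using DERIV_imp_deriv by metis
qed

lemma Cb_inf_deriv_bounded: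
  assumes "\<phi> \<in> Cb_inf" shows "bounded (range (deriv \<phi>))"
proof -
  obtain D where D: "D 0 = \<phi>" "\<And>k x. (D k has_real_derivative D (Suc k) x) (at x)"
    "\<And>k. \<exists>B. \<forall>x. \<bar>D k x\<bar> \<le> B"
    using Cb_infE[OF assms] by metis
  have "deriv \<phi> = D 1"
  proof
    fix x
    have "(\<phi> has_real_derivative D 1 x) (at x)" using D(2)[of 0 x] D(1) by simp
    then show "deriv \<phi> x = D 1 x" by (rule DERIV_imp_deriv)
  qed
  then show ?thesis using D(3)[of 1] by (simp add: bounded_range_iff_abs)
qed

lemma Cb_inf_bounded:
  assumes "\<phi> \<in> Cb_inf" shows "bounded (range \<phi>)"
  using assms unfolding Cb_inf_def by auto

lemma Cb_inf_cont:
  assumes "\<phi> \<in> Cb_inf" shows "continuous_on UNIV \<phi>"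
  using Cb_inf_deriv[OF assms] DERIV_isCont continuous_at_imp_continuous_on by blast

lemma Cb_inf_scale:
  assumes "\<phi> \<in> Cb_inf" shows "(\<lambda>x. c * \<phi> x) \<in> Cb_inf"
proof -
  obtain D where D: "D 0 = \<phi>" "\<And>k x. (D k has_real_derivative D (Suc k) x) (at x)"
    "\<And>k. \<exists>B. \<forall>x. \<bar>D k x\<bar> \<le> B"
    using Cb_infE[OF assms] by metis
  show ?thesis
  proof (rule Cb_infI[where D="\<lambda>k x. c * D k x"])
    show "(\<lambda>x. c * D 0 x) = (\<lambda>x. c * \<phi> x)" using D(1) by simp
    show "((\<lambda>x. c * D k x) has_real_derivative c * D (Suc k) x) (at x)" for k x
      by (intro DERIV_cmult D(2))
    show "\<exists>B. \<forall>x. \<bar>c * D k x\<bar> \<le> B" for k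
    proof -
      obtain B where "\<forall>x. \<bar>D k x\<bar> \<le> B" using D(3) by blast
      then have "\<forall>x. \<bar>c * D k x\<bar> \<le> \<bar>c\<bar> * B" by (auto simp: abs_mult intro: mult_left_mono)
      then show ?thesis by blast
    qed
  qed
qed

lemma deriv_scale:
  assumes "\<phi> \<in> Cb_inf" shows "deriv (\<lambda>x. c * \<phi> x) = (\<lambda>x. c * deriv \<phi> x)"
  using DERIV_imp_deriv[OF DERIV_cmult[OF Cb_inf_deriv[OF assms]]] by (auto simp: fun_eq_iff)

lemma antideriv:
  fixes \<phi> :: "real \<Rightarrow> real"
  assumes cont: "continuous_on UNIV \<phi>"
  shows "\<exists>\<Phi>. \<forall>x. (\<Phi> has_real_derivative \<phi> x) (at x)"
proof -
  define \<Phi> where "\<Phi> y = integral {0..y} \<phi> - integral {y..0} \<phi>" for y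
  have intg: "\<phi> integrable_on {a..b}" for a b
    by (rule integrable_continuous_real) (rule continuous_on_subset[OF cont], simp)
  have eqG: "\<Phi> y = integral {a..y} \<phi> - integral {a..0} \<phi>" if "a \<le> y" "a \<le> 0" for a y
  proof (cases "0 \<le> y")
    case True
    have "integral {a..0} \<phi> + integral {0..y} \<phi> = integral {a..y} \<phi>"
      using Henstock_Kurzweil_Integration.integral_combine[OF _ _ intg[of a y], of 0] that True by simp
    moreover have "integral {y..0} \<phi> = 0"
    proof (cases "y = 0")
      case True then show ?thesis by simp
    next
      case False then have "{y..0} = {}" using \<open>0 \<le> y\<close> by auto
      then show ?thesis by simp
    qed
    ultimately show ?thesis unfolding \<Phi>_def by simp
  next
    case False
    have "integral {a..y} \<phi> + integral {y..0} \<phi> = integral {a..0} \<phi>"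
      using Henstock_Kurzweil_Integration.integral_combine[OF _ _ intg[of a 0], of y] that False by simp
    moreover have "{0..y} = {}" using False by auto
    ultimately show ?thesis unfolding \<Phi>_def by simp
  qed
  have "(\<Phi> has_real_derivative \<phi> x) (at x)" for x
  proof -
    define a where "a = min x 0 - 1"
    define b where "b = max x 0 + 1"
    have xin: "x \<in> {a..b}" unfolding a_def b_def by (simp add: min_def max_def)
    have d0: "((\<lambda>y. integral {a..y} \<phi>) has_real_derivative \<phi> x) (at x within {a..b})"
      by (rule integral_has_real_derivative[OF continuous_on_subset[OF cont] xin]) simp
    have "x \<in> interior {a..b}" unfolding interior_atLeastAtMost_real a_def b_def by (simp add: min_def max_def)
    then have eq: "at x within {a..b} = at x" by (rule at_within_interior)
    have d1: "((\<lambda>y. integral {a..y} \<phi>) has_real_derivative \<phi> x) (at x)"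
      using d0 unfolding eq .
    have d2: "((\<lambda>y. integral {a..y} \<phi> - integral {a..0} \<phi>) has_real_derivative \<phi> x) (at x)"
      using DERIV_diff[OF d1 DERIV_const] by simp
    show ?thesis
    proof (rule has_field_derivative_transform_within_open[OF d2, of "{a<..}"])
      show "x \<in> {a<..}" unfolding a_def by (simp add: min_def)
      show "integral {a..z} \<phi> - integral {a..0} \<phi> = \<Phi> z" if "z \<in> {a<..}" for z
      proof -
        have "a \<le> 0" unfolding a_def by simp
        moreover have "a \<le> z" using that by simp
        ultimately show ?thesis using eqG[of a z] by simp
      qed
    qed simp
  qed
  then show ?thesis by blast
qed

lemma lip:
  fixes F :: "real \<Rightarrow> real"
  assumes "\<And>x. (F has_real_derivative F' x) (at x)" "\<And>x. \<bar>F' x\<bar> \<le> L"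
  shows "\<bar>F a - F b\<bar> \<le> L * \<bar>a - b\<bar>"
proof -
  have key: "\<bar>F v - F u\<bar> \<le> L * \<bar>v - u\<bar>" if "u < v" for u v
  proof -
    have "\<exists>z>u. z < v \<and> F v - F u = (v - u) * F' z" by (rule MVT2[OF that]) (rule assms(1))
    then obtain z where "F v - F u = (v - u) * F' z" by blast
    then have "\<bar>F v - F u\<bar> = \<bar>v - u\<bar> * \<bar>F' z\<bar>" by (simp add: abs_mult)
    also have "\<dots> \<le> \<bar>v - u\<bar> * L" by (intro mult_left_mono assms(2)) simp
    finally show ?thesis by (simp add: mult.commute)
  qed
  show ?thesis
  proof (cases a b rule: linorder_cases)
    case less then show ?thesis using key[of a b] by (simp add: abs_minus_commute)
  next
    case greater then show ?thesis using key[of b a] by simp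
  qed simp
qed

lemma deriv_comp_lin:
  fixes F F' :: "real \<Rightarrow> real"
  assumes "\<And>x. (F has_real_derivative F' x) (at x)"
  shows "((\<lambda>s. F (a + c * s)) has_real_derivative F' (a + c * s) * c) (at s)"
proof -
  have g: "((\<lambda>s. a + c * s) has_real_derivative c) (at s)" by (auto intro!: derivative_eq_intros)
  show ?thesis by (rule DERIV_chain2[OF assms g])
qed

lemma chi_bound:
  fixes \<Phi> \<Psi> \<phi> :: "real \<Rightarrow> real"
  assumes dPhi: "\<And>x. (\<Phi> has_real_derivative \<phi> x) (at x)"
    and dPsi: "\<And>x. (\<Psi> has_real_derivative \<Phi> x) (at x)"
    and b: "\<And>x. \<bar>\<phi> x\<bar> \<le> 1" and h: "0 < h"
  shows "\<bar>\<Phi> y - (\<Psi> (y + h) - \<Psi> (y - h)) / (2 * h)\<bar> \<le> h / 2"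
proof -
  define G where "G s = \<Psi> (y + s) - \<Psi> (y - s) - 2 * s * \<Phi> y" for s
  have dG: "(G has_real_derivative (\<Phi> (y + s) + \<Phi> (y - s) - 2 * \<Phi> y)) (at s)" for s
  proof -
    have d1: "((\<lambda>s. \<Psi> (y + s)) has_real_derivative \<Phi> (y + s)) (at s)"
      using deriv_comp_lin[OF dPsi, of y 1 s] by simp
    have d2: "((\<lambda>s. \<Psi> (y - s)) has_real_derivative \<Phi> (y - s) * (-1)) (at s)"
      using deriv_comp_lin[OF dPsi, of y "-1" s] by simp
    have "((\<lambda>s. \<Psi> (y + s) - \<Psi> (y - s) - 2 * s * \<Phi> y) has_real_derivative
        \<Phi> (y + s) - \<Phi> (y - s) * (-1) - 2 * 1 * \<Phi> y) (at s)"
      by (intro DERIV_diff d1 d2 DERIV_cmult_right DERIV_cmult DERIV_ident)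
    then show ?thesis unfolding G_def by simp
  qed
  have lipP: "\<bar>\<Phi> a - \<Phi> b\<bar> \<le> 1 * \<bar>a - b\<bar>" for a b
    by (rule lip[OF dPhi b])
  have dGb: "\<bar>\<Phi> (y + s) + \<Phi> (y - s) - 2 * \<Phi> y\<bar> \<le> 2 * \<bar>s\<bar>" for s
  proof -
    have "\<bar>\<Phi> (y + s) - \<Phi> y\<bar> \<le> \<bar>s\<bar>" using lipP[of "y + s" y] by simp
    moreover have "\<bar>\<Phi> (y - s) - \<Phi> y\<bar> \<le> \<bar>s\<bar>" using lipP[of "y - s" y] by simp
    ultimately show ?thesis by linarith
  qed
  have up: "(\<lambda>s. G s - s\<^sup>2) h \<le> (\<lambda>s. G s - s\<^sup>2) 0"
  proof (rule DERIV_nonpos_imp_nonincreasing[of 0 h])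
    show "0 \<le> h" using h by simp
    fix s assume s: "0 \<le> s" "s \<le> h"
    have "((\<lambda>s. G s - s\<^sup>2) has_real_derivative
        (\<Phi> (y + s) + \<Phi> (y - s) - 2 * \<Phi> y) - 2 * s) (at s)"
      using DERIV_diff[OF dG DERIV_pow[of 2 s]] by simp
    moreover have "(\<Phi> (y + s) + \<Phi> (y - s) - 2 * \<Phi> y) - 2 * s \<le> 0"
      using dGb[of s] s by simp
    ultimately show "\<exists>y. ((\<lambda>s. G s - s\<^sup>2) has_real_derivative y) (at s) \<and> y \<le> 0" by blast
  qed
  have lo: "(\<lambda>s. G s + s\<^sup>2) 0 \<le> (\<lambda>s. G s + s\<^sup>2) h"
  proof (rule DERIV_nonneg_imp_nondecreasing[of 0 h])
    show "0 \<le> h" using h by simp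
    fix s assume s: "0 \<le> s" "s \<le> h"
    have "((\<lambda>s. G s + s\<^sup>2) has_real_derivative
        (\<Phi> (y + s) + \<Phi> (y - s) - 2 * \<Phi> y) + 2 * s) (at s)"
      using DERIV_add[OF dG DERIV_pow[of 2 s]] by simp
    moreover have "0 \<le> (\<Phi> (y + s) + \<Phi> (y - s) - 2 * \<Phi> y) + 2 * s"
      using dGb[of s] s by simp
    ultimately show "\<exists>y. ((\<lambda>s. G s + s\<^sup>2) has_real_derivative y) (at s) \<and> 0 \<le> y" by blast
  qed
  have G0: "G 0 = 0" unfolding G_def by simp
  have Gb: "\<bar>G h\<bar> \<le> h\<^sup>2" using up lo G0 by simp
  have "\<Phi> y - (\<Psi> (y + h) - \<Psi> (y - h)) / (2 * h) = - G h / (2 * h)"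
    unfolding G_def using h by (simp add: field_simps)
  then have "\<bar>\<Phi> y - (\<Psi> (y + h) - \<Psi> (y - h)) / (2 * h)\<bar> = \<bar>G h\<bar> / (2 * h)"
    using h by simp
  also have "\<dots> \<le> h\<^sup>2 / (2 * h)" using Gb h by (intro divide_right_mono) simp_all
  also have "\<dots> = h / 2" using h by (simp add: power2_eq_square)
  finally show ?thesis .
qed

lemma shift_deriv:
  fixes F F' :: "real \<Rightarrow> real"
  assumes "\<And>x. (F has_real_derivative F' x) (at x)"
  shows "((\<lambda>y. (F (y + h) - F (y - h)) / (2 * h)) has_real_derivative
           (F' (y + h) - F' (y - h)) / (2 * h)) (at y)"
proof -
  have d1: "((\<lambda>y. F (y + h)) has_real_derivative F' (y + h)) (at y)"
    using deriv_comp_lin[OF assms, of h 1 y] by (simp add: add.commute)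
  have d2: "((\<lambda>y. F (y - h)) has_real_derivative F' (y - h)) (at y)"
    using deriv_comp_lin[OF assms, of "-h" 1 y] by simp
  show ?thesis by (intro DERIV_cdivide DERIV_diff d1 d2)
qed

lemma smooth_decomp:
  assumes phi: "\<phi> \<in> Cb_inf" and b1: "\<And>x. \<bar>\<phi> x\<bar> \<le> 1" and h: "0 < h"
  obtains phs ch where "phs \<in> Cb_inf" "\<And>x. \<bar>phs x\<bar> \<le> 1" "\<And>x. \<bar>deriv phs x\<bar> \<le> 1 / h"
    "ch \<in> Cb_inf" "\<And>x. \<bar>ch x\<bar> \<le> h / 2" "\<And>x. deriv ch x = \<phi> x - phs x"
    "\<And>x. \<bar>deriv ch x\<bar> \<le> 2"
proof -
  obtain D where D: "D 0 = \<phi>" "\<And>k x. (D k has_real_derivative D (Suc k) x) (at x)"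
    "\<And>k. \<exists>B. \<forall>x. \<bar>D k x\<bar> \<le> B"
    using Cb_infE[OF phi] by metis
  obtain \<Phi> where dPhi: "\<And>x. (\<Phi> has_real_derivative \<phi> x) (at x)"
    using antideriv[OF Cb_inf_cont[OF phi]] by blast
  have cPhi: "continuous_on UNIV \<Phi>"
    using dPhi DERIV_isCont continuous_at_imp_continuous_on by blast
  obtain \<Psi> where dPsi: "\<And>x. (\<Psi> has_real_derivative \<Phi> x) (at x)"
    using antideriv[OF cPhi] by blast
  define phs where "phs y = (\<Phi> (y + h) - \<Phi> (y - h)) / (2 * h)" for y
  define Ds where "Ds k = (case k of 0 \<Rightarrow> phs | Suc j \<Rightarrow> (\<lambda>y. (D j (y + h) - D j (y - h)) / (2 * h)))" for k
  define ch where "ch y = \<Phi> y - (\<Psi> (y + h) - \<Psi> (y - h)) / (2 * h)" for y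
  define Dc where "Dc k = (case k of 0 \<Rightarrow> ch | Suc j \<Rightarrow> (\<lambda>y. D j y - Ds j y))" for k
  have lipP: "\<bar>\<Phi> a - \<Phi> b\<bar> \<le> 1 * \<bar>a - b\<bar>" for a b
    by (rule lip[OF dPhi b1])
  have phis_b: "\<bar>phs x\<bar> \<le> 1" for x
  proof -
    have "\<bar>\<Phi> (x + h) - \<Phi> (x - h)\<bar> \<le> 2 * h" using lipP[of "x + h" "x - h"] h by simp
    then show ?thesis unfolding phs_def using h by (simp add: abs_div divide_le_eq)
  qed
  have dDs: "(Ds k has_real_derivative Ds (Suc k) x) (at x)" for k x
  proof (cases k)
    case 0
    have "(phs has_real_derivative (\<phi> (x + h) - \<phi> (x - h)) / (2 * h)) (at x)"
      unfolding phs_def by (rule shift_deriv[OF dPhi])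
    then show ?thesis using 0 D(1) by (simp add: Ds_def)
  next
    case (Suc j)
    show ?thesis using Suc shift_deriv[OF D(2), of j h x] by (simp add: Ds_def)
  qed
  have bDs: "\<exists>B. \<forall>x. \<bar>Ds k x\<bar> \<le> B" for k
  proof (cases k)
    case 0 then show ?thesis using phis_b by (intro exI[of _ 1]) (simp add: Ds_def)
  next
    case (Suc j)
    obtain B where B: "\<forall>x. \<bar>D j x\<bar> \<le> B" using D(3) by blast
    have "\<bar>Ds k x\<bar> \<le> B / h" for x
    proof -
      have "\<bar>D j (x + h) - D j (x - h)\<bar> \<le> 2 * B" using B[rule_format, of "x + h"] B[rule_format, of "x - h"] by linarith
      then show ?thesis using Suc h by (simp add: Ds_def abs_div divide_le_eq field_simps)
    qed
    then show ?thesis by blast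
  qed
  have phis_C: "phs \<in> Cb_inf" by (rule Cb_infI[of Ds, OF _ dDs bDs]) (simp add: Ds_def)
  have dphis: "deriv phs x = (\<phi> (x + h) - \<phi> (x - h)) / (2 * h)" for x
    using DERIV_imp_deriv[OF dDs[of 0 x]] D(1) by (simp add: Ds_def)
  have dphis_b: "\<bar>deriv phs x\<bar> \<le> 1 / h" for x
  proof -
    have "\<bar>\<phi> (x + h) - \<phi> (x - h)\<bar> \<le> 2" using b1[of "x + h"] b1[of "x - h"] by linarith
    then show ?thesis unfolding dphis using h by (simp add: abs_div divide_le_eq field_simps)
  qed
  have dDc: "(Dc k has_real_derivative Dc (Suc k) x) (at x)" for k x
  proof (cases k)
    case 0
    have "(ch has_real_derivative \<phi> x - (\<Phi> (x + h) - \<Phi> (x - h)) / (2 * h)) (at x)"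
      unfolding ch_def by (intro DERIV_diff dPhi shift_deriv[OF dPsi])
    then show ?thesis using 0 D(1) by (simp add: Dc_def Ds_def phs_def)
  next
    case (Suc j)
    show ?thesis using Suc DERIV_diff[OF D(2)[of j x] dDs[of j x]] by (simp add: Dc_def)
  qed
  have chi_b: "\<bar>ch x\<bar> \<le> h / 2" for x
    unfolding ch_def by (rule chi_bound[OF dPhi dPsi b1 h])
  have bDc: "\<exists>B. \<forall>x. \<bar>Dc k x\<bar> \<le> B" for k
  proof (cases k)
    case 0 then show ?thesis using chi_b by (intro exI[of _ "h/2"]) (simp add: Dc_def)
  next
    case (Suc j)
    obtain B1 where B1: "\<forall>x. \<bar>D j x\<bar> \<le> B1" using D(3) by blast
    obtain B2 where B2: "\<forall>x. \<bar>Ds j x\<bar> \<le> B2" using bDs by blast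
    have "\<bar>Dc k x\<bar> \<le> B1 + B2" for x
      using Suc B1[rule_format, of x] B2[rule_format, of x] by (simp add: Dc_def)
    then show ?thesis by blast
  qed
  have chi_C: "ch \<in> Cb_inf" by (rule Cb_infI[of Dc, OF _ dDc bDc]) (simp add: Dc_def)
  have dchi: "deriv ch x = \<phi> x - phs x" for x
    using DERIV_imp_deriv[OF dDc[of 0 x]] D(1) by (simp add: Dc_def Ds_def)
  have dchi_b: "\<bar>deriv ch x\<bar> \<le> 2" for x
    unfolding dchi using b1[of x] phis_b[of x] by linarith
  show ?thesis
    by (rule that[OF phis_C phis_b dphis_b chi_C chi_b dchi dchi_b])
qed

lemma Cb_inf_meas: "\<psi> \<in> Cb_inf \<Longrightarrow> \<psi> \<in> borel_measurable borel"
  by (rule borel_measurable_continuous_onI[OF Cb_inf_cont])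

lemma Cb_inf_comp_integrable:
  assumes "prob_space M" "f \<in> borel_measurable M" "\<psi> \<in> Cb_inf"
  shows "integrable M (\<lambda>x. \<psi> (f x))"
proof -
  interpret prob_space M by fact
  obtain B where B: "\<And>y. \<bar>\<psi> y\<bar> \<le> B" using Cb_inf_bounded[OF assms(3)] by (auto simp: bounded_range_iff_abs)
  show ?thesis
  proof (rule integrable_const_bound)
    show "AE x in M. norm (\<psi> (f x)) \<le> B" using B by simp
    show "(\<lambda>x. \<psi> (f x)) \<in> borel_measurable M"
      using measurable_compose[OF assms(2) Cb_inf_meas[OF assms(3)]] by (simp add: o_def)
  qed
qed

lemma Cb_inf_comp_le1:
  assumes "prob_space M" "f \<in> borel_measurable M" "\<psi> \<in> Cb_inf" "\<And>x. \<bar>\<psi> x\<bar> \<le> 1"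
  shows "\<bar>\<integral>x. \<psi> (f x) \<partial>M\<bar> \<le> 1"
proof -
  interpret prob_space M by fact
  have i: "integrable M (\<lambda>x. \<psi> (f x))" by (rule Cb_inf_comp_integrable[OF assms(1-3)])
  have "\<bar>\<integral>x. \<psi> (f x) \<partial>M\<bar> \<le> (\<integral>x. \<bar>\<psi> (f x)\<bar> \<partial>M)" by (rule integral_abs_bound)
  also have "\<dots> \<le> 1"
    by (rule integral_le_const) (use i assms(4) in auto)
  finally show ?thesis .
qed

lemma sin_Cb: "(\<lambda>x. sin x) \<in> Cb_inf"
proof (rule Cb_infI[where D="\<lambda>k x. sin (x + real k * (pi/2))"])
  show "(\<lambda>x. sin (x + real 0 * (pi / 2))) = (\<lambda>x. sin x)" by simp
  show "((\<lambda>x. sin (x + real k * (pi / 2))) has_real_derivative sin (x + real (Suc k) * (pi / 2))) (at x)" for k x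
  proof -
    have e: "x + real (Suc k) * (pi/2) = (x + real k * (pi/2)) + pi/2" by (simp add: algebra_simps)
    have "((\<lambda>x. sin (x + real k * (pi / 2))) has_real_derivative cos (x + real k * (pi / 2))) (at x)"
      by (auto intro!: derivative_eq_intros)
    then show ?thesis unfolding e by (simp add: sin_add)
  qed
  show "\<exists>B. \<forall>x. \<bar>sin (x + real k * (pi / 2))\<bar> \<le> B" for k by (intro exI[of _ 1]) simp
qed

lemma C_nonneg:
  assumes HC: "\<And>\<psi>. \<psi> \<in> Cb_inf \<Longrightarrow> sup_norm \<psi> \<le> 1 \<Longrightarrow>
      s powr q * (\<integral>x. deriv \<psi> (f x) \<partial>M) \<le> C * sup_norm (deriv \<psi>) powr r"
    and s: "0 < s"
  shows "0 \<le> C"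
proof (rule ccontr)
  assume neg: "\<not> 0 \<le> C"
  have dsin: "deriv (\<lambda>x. sin x) = (\<lambda>x. cos x)"
    by (rule ext, rule DERIV_imp_deriv, rule DERIV_sin)
  have s1: "sup_norm (\<lambda>x. sin x) \<le> 1" by (rule sup_norm_le) simp
  have s2: "sup_norm (\<lambda>x. -1 * sin x) \<le> 1" by (rule sup_norm_le) simp
  have dnsin: "deriv (\<lambda>x. -1 * sin x) = (\<lambda>x. -1 * cos x)"
    by (rule ext, rule DERIV_imp_deriv, rule DERIV_cmult, rule DERIV_sin)
  have bc: "bounded (range (\<lambda>x::real. cos x))" unfolding bounded_range_iff_abs by (rule exI[of _ 1]) simp
  have bc2: "bounded (range (\<lambda>x::real. -1 * cos x))" unfolding bounded_range_iff_abs by (rule exI[of _ 1]) simp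
  have S1: "1 \<le> sup_norm (\<lambda>x. cos x)" using sup_norm_ge[OF bc, of 0] by simp
  have S2: "1 \<le> sup_norm (\<lambda>x. -1 * cos x)" using sup_norm_ge[OF bc2, of 0] by simp
  have P1: "0 < sup_norm (\<lambda>x. cos x) powr r" using S1 by simp
  have P2: "0 < sup_norm (\<lambda>x. -1 * cos x) powr r" using S2 by simp
  have a1: "s powr q * (\<integral>x. cos (f x) \<partial>M) \<le> C * sup_norm (\<lambda>x. cos x) powr r"
    using HC[OF sin_Cb s1] unfolding dsin .
  have a2: "s powr q * (\<integral>x. -1 * cos (f x) \<partial>M) \<le> C * sup_norm (\<lambda>x. -1 * cos x) powr r"
    using HC[OF Cb_inf_scale[OF sin_Cb] s2] unfolding dnsin .
  have "C * sup_norm (\<lambda>x. cos x) powr r < 0" using neg P1 by (simp add: mult_neg_pos)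
  moreover have "C * sup_norm (\<lambda>x. -1 * cos x) powr r < 0" using neg P2 by (simp add: mult_neg_pos)
  moreover have "(\<integral>x. -1 * cos (f x) \<partial>M) = - (\<integral>x. cos (f x) \<partial>M)"
    by (simp add: integral_mult_right_zero)
  ultimately show False using a1 a2 s by (smt (verit) mult_minus_right)
qed

lemma sig_pos:
  assumes "prob_space M" "f \<in> borel_measurable M" "integrable M (\<lambda>x. (f x)\<^sup>2)"
    "\<not> (\<exists>c. AE x in M. f x = c)"
  shows "0 < sigma M f"
proof -
  interpret prob_space M by fact
  have fi: "integrable M f" by (rule square_integrable_imp_integrable[OF assms(2,3)])
  define c where "c = (\<integral>y. f y \<partial>M)"
  have i2: "integrable M (\<lambda>x. (f x - c)\<^sup>2)"
  proof -
    have "integrable M (\<lambda>x. (f x)\<^sup>2 + c\<^sup>2 - 2 * f x * c)"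
      using assms(3) fi by auto
    then show ?thesis by (simp add: power2_diff)
  qed
  have nn: "0 \<le> (\<integral>x. (f x - c)\<^sup>2 \<partial>M)" by (rule integral_nonneg_AE) simp
  have "(\<integral>x. (f x - c)\<^sup>2 \<partial>M) \<noteq> 0"
  proof
    assume "(\<integral>x. (f x - c)\<^sup>2 \<partial>M) = 0"
    then have "AE x in M. (f x - c)\<^sup>2 = 0"
      using integral_nonneg_eq_0_iff_AE[OF i2] by simp
    then have "AE x in M. f x = c" by eventually_elim simp
    then show False using assms(4) by blast
  qed
  with nn have "0 < (\<integral>x. (f x - c)\<^sup>2 \<partial>M)" by linarith
  then show ?thesis unfolding sigma_def c_def by simp
qed

lemma apply_hyp:
  assumes HC: "\<And>\<psi>. \<psi> \<in> Cb_inf \<Longrightarrow> sup_norm \<psi> \<le> 1 \<Longrightarrow>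
      s powr q * (\<integral>x. deriv \<psi> (f x) \<partial>M) \<le> C * sup_norm (deriv \<psi>) powr (1 - q)"
    and C0: "0 \<le> C" and s: "0 < s" and q: "q \<le> 1"
    and psi: "\<psi> \<in> Cb_inf" and H: "0 < H" "\<And>x. \<bar>\<psi> x\<bar> \<le> H"
    and B: "0 < B" "\<And>x. \<bar>deriv \<psi> x\<bar> \<le> B"
  shows "(\<integral>x. deriv \<psi> (f x) \<partial>M) \<le> C * H * (B / H) powr (1 - q) / s powr q"
proof -
  define \<psi>' where "\<psi>' = (\<lambda>x. (1 / H) * \<psi> x)"
  have C': "\<psi>' \<in> Cb_inf" unfolding \<psi>'_def by (rule Cb_inf_scale[OF psi])
  have sn: "sup_norm \<psi>' \<le> 1" unfolding \<psi>'_def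
    by (rule sup_norm_le) (use H in \<open>simp add: abs_mult divide_le_eq\<close>)
  have d': "deriv \<psi>' = (\<lambda>x. (1 / H) * deriv \<psi> x)" unfolding \<psi>'_def by (rule deriv_scale[OF psi])
  have snd: "sup_norm (deriv \<psi>') \<le> B / H" unfolding d'
    by (rule sup_norm_le) (use H B in \<open>simp add: abs_mult divide_le_eq le_divide_eq mult.commute\<close>)
  have nn: "0 \<le> sup_norm (deriv \<psi>')" by (rule sup_norm_nonneg[OF Cb_inf_deriv_bounded[OF C']])
  have pm: "sup_norm (deriv \<psi>') powr (1 - q) \<le> (B / H) powr (1 - q)"
    by (rule powr_mono2) (use q nn snd in auto)
  have "s powr q * ((1 / H) * (\<integral>x. deriv \<psi> (f x) \<partial>M)) = s powr q * (\<integral>x. deriv \<psi>' (f x) \<partial>M)"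
    unfolding d' by (simp add: integral_mult_right_zero)
  also have "\<dots> \<le> C * sup_norm (deriv \<psi>') powr (1 - q)" by (rule HC[OF C' sn])
  also have "\<dots> \<le> C * (B / H) powr (1 - q)" by (rule mult_left_mono[OF pm C0])
  finally have *: "s powr q * ((1 / H) * (\<integral>x. deriv \<psi> (f x) \<partial>M)) \<le> C * (B / H) powr (1 - q)" .
  have sp: "0 < s powr q" using s by simp
  from * sp H show ?thesis by (simp add: field_simps)
qed

lemma alg_simp:
  fixes h q s C :: real assumes h: "0 < h" and s: "0 < s"
  shows "C * (h / 2) * (2 / (h / 2)) powr (1 - q) / s powr q = 2 * C * (h / 4) powr q * s powr (- q)"
proof -
  have e1: "2 / (h / 2) = 4 / h" by simp
  have A: "(4 / h) powr (1 - q) = (4 / h) / (4 / h) powr q"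
    using h by (simp add: powr_diff)
  have B: "(4 / h) powr q * (h / 4) powr q = 1"
    using h by (simp add: powr_mult[symmetric])
  have pos1: "0 < (4 / h) powr q" using h by simp
  have C': "s powr (- q) = 1 / s powr q" by (simp add: powr_minus_divide)
  have "(h / 4) powr q = 1 / (4 / h) powr q" using B pos1 by (simp add: field_simps)
  then show ?thesis unfolding e1 A C' using h s pos1 by (simp add: field_simps)
qed

lemma key_bound:
  fixes \<mu> :: "'a measure" and f g :: "'a \<Rightarrow> real"
  assumes P: "prob_space \<mu>" and fm: "f \<in> borel_measurable \<mu>" and gm: "g \<in> borel_measurable \<mu>"
    and HCf: "\<And>\<psi>. \<psi> \<in> Cb_inf \<Longrightarrow> sup_norm \<psi> \<le> 1 \<Longrightarrow>
      sigma \<mu> f powr q * (\<integral>x. deriv \<psi> (f x) \<partial>\<mu>) \<le> C * sup_norm (deriv \<psi>) powr (1 - q)"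
    and HCg: "\<And>\<psi>. \<psi> \<in> Cb_inf \<Longrightarrow> sup_norm \<psi> \<le> 1 \<Longrightarrow>
      sigma \<mu> g powr q * (\<integral>x. deriv \<psi> (g x) \<partial>\<mu>) \<le> C * sup_norm (deriv \<psi>) powr (1 - q)"
    and C0: "0 \<le> C" and sf: "0 < sigma \<mu> f" and sg: "0 < sigma \<mu> g" and q: "q \<le> 1"
    and Fup: "\<And>\<psi>. \<psi> \<in> Cb_inf \<Longrightarrow> sup_norm \<psi> \<le> 1 \<Longrightarrow> sup_norm (deriv \<psi>) \<le> 1 \<Longrightarrow>
      (\<integral>x. \<psi> (f x) \<partial>\<mu>) - (\<integral>x. \<psi> (g x) \<partial>\<mu>) \<le> F"
    and phi: "\<phi> \<in> Cb_inf" "\<And>x. \<bar>\<phi> x\<bar> \<le> 1" and h: "0 < h"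
  shows "(\<integral>x. \<phi> (f x) \<partial>\<mu>) - (\<integral>x. \<phi> (g x) \<partial>\<mu>)
     \<le> 2 * C * (h / 4) powr q * (sigma \<mu> f powr (- q) + sigma \<mu> g powr (- q)) + max 1 (1 / h) * F"
proof -
  obtain phs ch where S: "phs \<in> Cb_inf" "\<And>x. \<bar>phs x\<bar> \<le> 1" "\<And>x. \<bar>deriv phs x\<bar> \<le> 1 / h"
    "ch \<in> Cb_inf" "\<And>x. \<bar>ch x\<bar> \<le> h / 2" "\<And>x. deriv ch x = \<phi> x - phs x"
    "\<And>x. \<bar>deriv ch x\<bar> \<le> 2"
    using smooth_decomp[OF phi h] by blast
  have h2: "0 < h / 2" using h by simp
  have i1: "integrable \<mu> (\<lambda>x. \<phi> (f x))" by (rule Cb_inf_comp_integrable[OF P fm phi(1)])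
  have i2: "integrable \<mu> (\<lambda>x. phs (f x))" by (rule Cb_inf_comp_integrable[OF P fm S(1)])
  have i3: "integrable \<mu> (\<lambda>x. \<phi> (g x))" by (rule Cb_inf_comp_integrable[OF P gm phi(1)])
  have i4: "integrable \<mu> (\<lambda>x. phs (g x))" by (rule Cb_inf_comp_integrable[OF P gm S(1)])
  have a: "(\<integral>x. deriv ch (f x) \<partial>\<mu>) \<le> C * (h / 2) * (2 / (h / 2)) powr (1 - q) / sigma \<mu> f powr q"
    by (rule apply_hyp[OF HCf C0 sf q S(4) h2 S(5)]) (use S(7) in auto)
  have ea: "(\<integral>x. deriv ch (f x) \<partial>\<mu>) = (\<integral>x. \<phi> (f x) \<partial>\<mu>) - (\<integral>x. phs (f x) \<partial>\<mu>)"
    unfolding S(6) by (rule Bochner_Integration.integral_diff[OF i1 i2])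
  have mch: "(\<lambda>x. -1 * ch x) \<in> Cb_inf" by (rule Cb_inf_scale[OF S(4)])
  have dmch: "deriv (\<lambda>x. -1 * ch x) = (\<lambda>x. -1 * deriv ch x)" by (rule deriv_scale[OF S(4)])
  have b: "(\<integral>x. deriv (\<lambda>x. -1 * ch x) (g x) \<partial>\<mu>) \<le> C * (h / 2) * (2 / (h / 2)) powr (1 - q) / sigma \<mu> g powr q"
  proof -
    have hb: "\<And>x. \<bar>deriv (\<lambda>x. -1 * ch x) x\<bar> \<le> 2" unfolding dmch using S(7) by (simp add: abs_mult)
    have hc: "\<And>x. \<bar>-1 * ch x\<bar> \<le> h / 2" using S(5) by (simp add: abs_mult)
    have two: "0 < (2::real)" by simp
    show ?thesis using apply_hyp[OF HCg C0 sg q mch h2 hc two hb] by simp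
  qed
  have eb: "(\<integral>x. deriv (\<lambda>x. -1 * ch x) (g x) \<partial>\<mu>) = (\<integral>x. phs (g x) \<partial>\<mu>) - (\<integral>x. \<phi> (g x) \<partial>\<mu>)"
  proof -
    have "(\<integral>x. deriv (\<lambda>x. -1 * ch x) (g x) \<partial>\<mu>) = (\<integral>x. phs (g x) - \<phi> (g x) \<partial>\<mu>)"
      unfolding dmch S(6) by simp
    also have "\<dots> = (\<integral>x. phs (g x) \<partial>\<mu>) - (\<integral>x. \<phi> (g x) \<partial>\<mu>)"
      by (rule Bochner_Integration.integral_diff[OF i4 i3])
    finally show ?thesis .
  qed
  define m where "m = max 1 (1 / h)"
  have m1: "1 \<le> m" and mh: "1 / h \<le> m" unfolding m_def by auto
  have mpos: "0 < m" using m1 by simp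
  define \<psi> where "\<psi> = (\<lambda>x. (1 / m) * phs x)"
  have psiC: "\<psi> \<in> Cb_inf" unfolding \<psi>_def by (rule Cb_inf_scale[OF S(1)])
  have psi1: "sup_norm \<psi> \<le> 1" unfolding \<psi>_def
  proof (rule sup_norm_le)
    fix x
    have "\<bar>phs x\<bar> \<le> m" using S(2)[of x] m1 by linarith
    then show "\<bar>1 / m * phs x\<bar> \<le> 1" using mpos by (simp add: abs_mult divide_le_eq)
  qed
  have psi2: "sup_norm (deriv \<psi>) \<le> 1" unfolding \<psi>_def deriv_scale[OF S(1)]
  proof (rule sup_norm_le)
    fix x
    have "\<bar>deriv phs x\<bar> \<le> m" using S(3)[of x] mh by linarith
    then show "\<bar>1 / m * deriv phs x\<bar> \<le> 1" using mpos by (simp add: abs_mult divide_le_eq)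
  qed
  have "(\<integral>x. \<psi> (f x) \<partial>\<mu>) - (\<integral>x. \<psi> (g x) \<partial>\<mu>) \<le> F" by (rule Fup[OF psiC psi1 psi2])
  then have "(1 / m) * ((\<integral>x. phs (f x) \<partial>\<mu>) - (\<integral>x. phs (g x) \<partial>\<mu>)) \<le> F"
    unfolding \<psi>_def by (simp add: integral_mult_right_zero right_diff_distrib)
  then have c: "(\<integral>x. phs (f x) \<partial>\<mu>) - (\<integral>x. phs (g x) \<partial>\<mu>) \<le> m * F"
    using mpos by (simp add: field_simps)
  have "(\<integral>x. \<phi> (f x) \<partial>\<mu>) - (\<integral>x. \<phi> (g x) \<partial>\<mu>)
      = (\<integral>x. deriv ch (f x) \<partial>\<mu>) + (\<integral>x. deriv (\<lambda>x. -1 * ch x) (g x) \<partial>\<mu>)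
        + ((\<integral>x. phs (f x) \<partial>\<mu>) - (\<integral>x. phs (g x) \<partial>\<mu>))"
    unfolding ea eb by simp
  also have "\<dots> \<le> C * (h / 2) * (2 / (h / 2)) powr (1 - q) / sigma \<mu> f powr q
      + C * (h / 2) * (2 / (h / 2)) powr (1 - q) / sigma \<mu> g powr q + m * F"
    using a b c by linarith
  also have "\<dots> = 2 * C * (h / 4) powr q * (sigma \<mu> f powr (- q) + sigma \<mu> g powr (- q)) + m * F"
    unfolding alg_simp[OF h sf] alg_simp[OF h sg] by (simp add: algebra_simps)
  finally show ?thesis unfolding m_def .
qed

lemma zero_Cb: "(\<lambda>x::real. 0::real) \<in> Cb_inf"
  by (rule Cb_infI[where D="\<lambda>k x. 0"]) auto

lemma limit_zero:
  fixes L K q :: real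
  assumes K: "0 \<le> K" and q: "0 < q" and H: "\<And>h. 0 < h \<Longrightarrow> L \<le> K * (h / 4) powr q"
  shows "L \<le> 0"
proof (rule ccontr)
  assume "\<not> L \<le> 0"
  then have L: "0 < L" by simp
  define t where "t = L / (2 * (K + 1))"
  have t: "0 < t" unfolding t_def using L K by simp
  define h where "h = 4 * t powr (1 / q)"
  have h: "0 < h" unfolding h_def using t by simp
  have "(h / 4) powr q = t" unfolding h_def using t q by (simp add: powr_powr)
  with H[OF h] have "L \<le> K * t" by simp
  moreover have "K * t < L"
  proof -
    have "K * t = L * (K / (2 * (K + 1)))" unfolding t_def using K by (simp add: field_simps)
    moreover have "L * (K / (2 * (K + 1))) < L * 1"
      by (rule mult_strict_left_mono[OF _ L]) (use K in \<open>simp add: field_simps\<close>)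
    ultimately show ?thesis by (simp only: mult_1_right)
  qed
  ultimately show False by simp
qed

theorem corollary5p3:
  fixes d :: nat and C :: real and \<mu> :: "'a::{real_vector,t2_space} measure"
    and f g :: "'a \<Rightarrow> real"
  assumes lcs: "locally_convex_space TYPE('a)"
    and d: "d \<ge> 1"
    and C: "\<And>\<mu>' :: 'a measure. \<And>h \<phi>. prob_space \<mu>' \<Longrightarrow> radon_measure \<mu>' \<Longrightarrow> log_concave \<mu>' \<Longrightarrow>
              h \<in> Pd d \<mu>' \<Longrightarrow> \<phi> \<in> Cb_inf \<Longrightarrow> sup_norm \<phi> \<le> 1 \<Longrightarrow>
              sigma \<mu>' h powr (1 / real d) * (\<integral>x. deriv \<phi> (h x) \<partial>\<mu>')
                \<le> C * sup_norm (deriv \<phi>) powr (1 - 1 / real d)"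
    and \<mu>: "prob_space \<mu>" "radon_measure \<mu>" "log_concave \<mu>"
    and f: "f \<in> Pd d \<mu>" "\<not> (\<exists>c. AE x in \<mu>. f x = c)"
    and g: "g \<in> Pd d \<mu>" "\<not> (\<exists>c. AE x in \<mu>. g x = c)"
  shows "tv_dist (distr \<mu> borel f) (distr \<mu> borel g)
           \<le> Cd_const d C (sigma \<mu> f) (sigma \<mu> g) *
             fm_dist (distr \<mu> borel f) (distr \<mu> borel g) powr (1 / (1 + real d))"
proof -
  define q where "q = 1 / real d"
  have q0: "0 < q" and q1: "q \<le> 1" using d by (simp_all add: q_def)
  have "f \<in> borel_measurable \<mu> \<and> integrable \<mu> (\<lambda>x. (f x)\<^sup>2)"
    using f(1) unfolding Pd_def mem_Collect_eq by blast
  then have fm: "f \<in> borel_measurable \<mu>" and f2: "integrable \<mu> (\<lambda>x. (f x)\<^sup>2)" by auto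
  have "g \<in> borel_measurable \<mu> \<and> integrable \<mu> (\<lambda>x. (g x)\<^sup>2)"
    using g(1) unfolding Pd_def mem_Collect_eq by blast
  then have gm: "g \<in> borel_measurable \<mu>" and g2: "integrable \<mu> (\<lambda>x. (g x)\<^sup>2)" by auto
  have sf: "0 < sigma \<mu> f" by (rule sig_pos[OF \<mu>(1) fm f2 f(2)])
  have sg: "0 < sigma \<mu> g" by (rule sig_pos[OF \<mu>(1) gm g2 g(2)])
  have HCf: "\<And>\<psi>. \<psi> \<in> Cb_inf \<Longrightarrow> sup_norm \<psi> \<le> 1 \<Longrightarrow>
      sigma \<mu> f powr q * (\<integral>x. deriv \<psi> (f x) \<partial>\<mu>) \<le> C * sup_norm (deriv \<psi>) powr (1 - q)"
    unfolding q_def by (rule C[OF \<mu> f(1)])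
  have HCg: "\<And>\<psi>. \<psi> \<in> Cb_inf \<Longrightarrow> sup_norm \<psi> \<le> 1 \<Longrightarrow>
      sigma \<mu> g powr q * (\<integral>x. deriv \<psi> (g x) \<partial>\<mu>) \<le> C * sup_norm (deriv \<psi>) powr (1 - q)"
    unfolding q_def by (rule C[OF \<mu> g(1)])
  have C0: "0 \<le> C" by (rule C_nonneg[OF HCf sf])
  define \<nu>1 where "\<nu>1 = distr \<mu> borel f"
  define \<nu>2 where "\<nu>2 = distr \<mu> borel g"
  define T where "T \<psi> = (\<integral>x. \<psi> x \<partial>\<nu>1) - (\<integral>x. \<psi> x \<partial>\<nu>2)" for \<psi> :: "real \<Rightarrow> real"
  have T_eq: "T \<psi> = (\<integral>x. \<psi> (f x) \<partial>\<mu>) - (\<integral>x. \<psi> (g x) \<partial>\<mu>)" if "\<psi> \<in> Cb_inf" for \<psi>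
    unfolding T_def \<nu>1_def \<nu>2_def
    using integral_distr[OF fm Cb_inf_meas[OF that]] integral_distr[OF gm Cb_inf_meas[OF that]]
    by simp
  have abs1: "\<bar>\<psi> x\<bar> \<le> 1" if "\<psi> \<in> Cb_inf" "sup_norm \<psi> \<le> 1" for \<psi> x
    using sup_norm_ge[OF Cb_inf_bounded[OF that(1)], of x] that(2) by linarith
  have T2: "T \<psi> \<le> 2" if "\<psi> \<in> Cb_inf" "sup_norm \<psi> \<le> 1" for \<psi>
  proof -
    have "\<bar>\<integral>x. \<psi> (f x) \<partial>\<mu>\<bar> \<le> 1" by (rule Cb_inf_comp_le1[OF \<mu>(1) fm that(1) abs1[OF that]])
    moreover have "\<bar>\<integral>x. \<psi> (g x) \<partial>\<mu>\<bar> \<le> 1" by (rule Cb_inf_comp_le1[OF \<mu>(1) gm that(1) abs1[OF that]])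
    ultimately show ?thesis unfolding T_eq[OF that(1)] by linarith
  qed
  define SF where "SF = {\<phi>. \<phi> \<in> Cb_inf \<and> sup_norm \<phi> \<le> 1 \<and> sup_norm (deriv \<phi>) \<le> 1}"
  define ST where "ST = {\<phi>. \<phi> \<in> Cb_inf \<and> sup_norm \<phi> \<le> 1}"
  define F where "F = fm_dist \<nu>1 \<nu>2"
  have F_eq: "F = (SUP \<phi>\<in>SF. T \<phi>)" unfolding F_def fm_dist_def SF_def T_def ..
  have tv_eq: "tv_dist \<nu>1 \<nu>2 = (SUP \<phi>\<in>ST. T \<phi>)" unfolding tv_dist_def ST_def T_def ..
  have bddF: "bdd_above (T ` SF)" using T2 unfolding SF_def by (auto intro!: bdd_aboveI2)
  have F_up: "T \<phi> \<le> F" if "\<phi> \<in> SF" for \<phi>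
    unfolding F_eq by (rule cSUP_upper[OF that bddF])
  have Fup: "(\<integral>x. \<psi> (f x) \<partial>\<mu>) - (\<integral>x. \<psi> (g x) \<partial>\<mu>) \<le> F"
    if "\<psi> \<in> Cb_inf" "sup_norm \<psi> \<le> 1" "sup_norm (deriv \<psi>) \<le> 1" for \<psi>
    using F_up[of \<psi>] that T_eq[OF that(1)] unfolding SF_def by simp
  have z_sn: "sup_norm (\<lambda>x::real. 0::real) \<le> 1" by (rule sup_norm_le) simp
  have z_d: "deriv (\<lambda>x::real. 0::real) = (\<lambda>x. 0)" by (rule ext, rule DERIV_imp_deriv) simp
  have zSF: "(\<lambda>x::real. 0::real) \<in> SF" unfolding SF_def using zero_Cb z_sn z_d by simp
  have F0: "0 \<le> F" using F_up[OF zSF] T_eq[OF zero_Cb] by simp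
  define K where "K = 2 * C * (sigma \<mu> f powr (- q) + sigma \<mu> g powr (- q))"
  have K0: "0 \<le> K" unfolding K_def using C0 by simp
  have key: "T \<phi> \<le> K * (h / 4) powr q + max 1 (1 / h) * F"
    if "\<phi> \<in> ST" "0 < h" for \<phi> h
  proof -
    have phi: "\<phi> \<in> Cb_inf" "sup_norm \<phi> \<le> 1" using that(1) unfolding ST_def by auto
    have e: "K * (h / 4) powr q = 2 * C * (h / 4) powr q * (sigma \<mu> f powr (- q) + sigma \<mu> g powr (- q))"
      unfolding K_def by (simp only: mult_ac)
    show ?thesis
      unfolding T_eq[OF phi(1)] e
      by (rule key_bound[OF \<mu>(1) fm gm HCf HCg C0 sf sg q1 Fup phi(1) abs1[OF phi] that(2)])
  qed
  define I where "I = (\<integral>t. exp (- t\<^sup>2/2) * \<bar>t\<bar> powr (1 / real d) \<partial>lborel)"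
  define M where "M = (2*pi) powr (-1/2) * I"
  have gM: "8 powr (-q) \<le> M" unfolding M_def I_def using gauss_lower[OF q0 q1] unfolding q_def .
  have M0: "0 \<le> M" using gM powr_gt_zero[of 8 "-q"] by linarith
  have Cd_eq: "Cd_const d C (sigma \<mu> f) (sigma \<mu> g) = 2 + K * M"
  proof -
    have e: "-1 / real d = - q" unfolding q_def by simp
    show ?thesis unfolding Cd_const_def e K_def M_def I_def by (simp only: mult_ac)
  qed
  define p where "p = 1 / (1 + real d)"
  have p0: "0 < p" unfolding p_def by simp
  have STne: "ST \<noteq> {}" using zSF unfolding SF_def ST_def by auto
  have goal: "T \<phi> \<le> (2 + K * M) * F powr p" if "\<phi> \<in> ST" for \<phi>
  proof -
    have phi: "\<phi> \<in> Cb_inf" "sup_norm \<phi> \<le> 1" using that unfolding ST_def by auto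
    show ?thesis
    proof (cases "1 \<le> F")
      case True
      have "1 \<le> F powr p" using True p0 ge_one_powr_ge_zero[of F p] by simp
      moreover have "2 \<le> 2 + K * M" using K0 M0 by simp
      ultimately have "2 \<le> (2 + K * M) * F powr p"
        by (metis (no_types, opaque_lifting) dual_order.trans mult.right_neutral mult_left_mono
            zero_le_numeral add_nonneg_nonneg mult_nonneg_nonneg K0 M0)
      then show ?thesis using T2[OF phi] by linarith
    next
      case False
      show ?thesis
      proof (cases "F = 0")
        case True
        have "T \<phi> \<le> 0"
        proof (rule limit_zero[OF K0 q0])
          fix h :: real assume "0 < h"
          then show "T \<phi> \<le> K * (h / 4) powr q" using key[OF that \<open>0 < h\<close>] True by simp
        qed
        then show ?thesis using True by simp
      next
        case Fn0: False
        have Fpos: "0 < F" using F0 Fn0 by simp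
        define t where "t = F powr p"
        have t0: "0 < t" unfolding t_def using Fpos by simp
        have t1: "t < 1" unfolding t_def using powr_less_mono2[OF p0, of F 1] Fpos False by simp
        define h where "h = t ^ d / 2"
        have h0: "0 < h" unfolding h_def using t0 by simp
        have td1: "t ^ d \<le> 1" using t0 t1 by (simp add: power_le_one)
        have h1: "1 / h \<ge> 1" using h0 td1 unfolding h_def by (simp add: field_simps)
        have mx: "max 1 (1 / h) = 1 / h" using h1 by simp
        have tdq: "(t ^ d) powr q = t"
        proof -
          have "(t ^ d) powr q = (t powr real d) powr q" using t0 by (simp add: powr_realpow)
          also have "\<dots> = t powr (real d * q)" by (simp add: powr_powr)
          also have "real d * q = 1" unfolding q_def using d by simp
          finally show ?thesis using t0 by simp
        qed
        have Ft: "F = t ^ (d + 1)"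
        proof -
          have "t ^ (d + 1) = t powr real (d + 1)" by (rule powr_realpow[OF t0, symmetric])
          also have "\<dots> = F powr (p * real (d + 1))" unfolding t_def by (rule powr_powr)
          also have "p * real (d + 1) = 1" unfolding p_def by (simp add: field_simps)
          finally show ?thesis using Fpos by simp
        qed
        have hq: "(h / 4) powr q = t * 8 powr (- q)"
        proof -
          have e: "h / 4 = t ^ d / 8" unfolding h_def by simp
          have "(h / 4) powr q = (t ^ d / 8) powr q" by (simp only: e)
          also have "\<dots> = (t ^ d) powr q / 8 powr q" by (rule powr_divide)
          also have "\<dots> = t * 8 powr (- q)" using tdq by (simp add: powr_minus_divide)
          finally show ?thesis .
        qed
        have Fh: "1 / h * F = 2 * t" unfolding h_def Ft using t0 by (simp add: field_simps)
        have "T \<phi> \<le> K * (h / 4) powr q + max 1 (1 / h) * F" by (rule key[OF that h0])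
        also have "\<dots> = K * 8 powr (- q) * t + 2 * t" unfolding mx hq Fh by simp
        also have "\<dots> \<le> K * M * t + 2 * t" using gM K0 t0 by (simp add: mult_left_mono mult_right_mono)
        also have "\<dots> = (2 + K * M) * F powr p" unfolding t_def by (simp add: algebra_simps)
        finally show ?thesis .
      qed
    qed
  qed
  have "tv_dist \<nu>1 \<nu>2 \<le> (2 + K * M) * F powr p"
    unfolding tv_eq by (rule cSUP_least[OF STne goal])
  then show ?thesis unfolding \<nu>1_def \<nu>2_def F_def p_def Cd_eq .
qed

end
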